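(* Let $\Omega\subseteq\mathbb{R}^n$ and $\varphi\in\Phi_{\mathrm w}(\Omega)$. The following are equivalent: (1) $\varphi$ satisfies condition (A2). (2) For every $\sigma>0$ there exist $\beta\in(0,1]$ and $h\in L^1(\Omega)\cap L^\infty(\Omega)$, $h\ge0$, such that for a.e. $x,y\in\Omega$: $\varphi(x,\beta t)\le\varphi(y,t)+h(x)+h(y)$ whenever $\varphi(y,t)\in[0,\sigma]$. (3) For every $\sigma>0$ there exist $\beta\in(0,1]$ and $h\in L^1(\Omega)\cap L^\infty(\Omega)$, $h\ge0$, such that for a.e. $x,y\in\Omega$: $\beta\varphi^{-1}(x,\max\{\tau,h(x)+h(y)\})\le\varphi^{-1}(y,\max\{\tau,h(x)+h(y)\})$ for all $\tau\in[0,\sigma]$. (4) For every $\sigma>0$ there exist $\beta\in(0,1]$ and $h\in L^1(\Omega)\cap L^\infty(\Omega)$, $h\ge0$, with $\|h\|_\infty\le\sigma/2$, such that for a.e. $x,y\in\Omega$: $\beta\varphi^{-1}(x,\tau)\le\varphi^{-1}(y,\tau)$ for all $\tau\in[h(x)+h(y),\sigma]$. (5) $\varphi$ satisfies condition (A0), and for every $\sigma>0$ there exist $\beta\in(0,1]$ and $h\in L^1(\Omega)\cap L^\infty(\Omega)$, $h\ge0$, such that for a.e. $x,y\in\Omega$: $\beta\varphi^{-1}(x,\tau)\le\varphi^{-1}(y,\tau)$ for all $\tau\in[h(x)+h(y),\sigma]$.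
   Context: A function $f:[0,\infty)\to[0,\infty]$ is $a$-almost increasing ($a\ge1$) if $f(s)\le a f(t)$ for all $s\le t$. A function $\varphi:\Omega\times[0,\infty)\to[0,\infty]$ is a weak $\Phi$-function, $\varphi\in\Phi_{\mathrm w}(\Omega)$, if for a.e. $x\in\Omega$: $x\mapsto\varphi(x,|f(x)|)$ is measurable for every measurable $f:\Omega\to\mathbb{R}$; $t\mapsto\varphi(x,t)$ is increasing (non-decreasing); $\varphi(x,0)=\lim_{t\to0^+}\varphi(x,t)=0$ and $\lim_{t\to\infty}\varphi(x,t)=\infty$; and $t\mapsto\varphi(x,t)/t$ is $a$-almost increasing on $(0,\infty)$ with $a\ge1$ independent of $x$. The left-inverse is $\varphi^{-1}(x,\tau):=\inf\{t\ge0:\varphi(x,t)\ge\tau\}$. Condition (A0): there exists $\beta\in(0,1]$ with $\beta\le\varphi^{-1}(x,1)\le1/\beta$ for a.e. $x\in\Omega$. Condition (A2): for every $\sigma>0$ there exist $\beta\in(0,1]$ and $h\in L^1(\Omega)\cap L^\infty(\Omega)$, $h\ge0$, such that for a.e. $x,y\in\Omega$, $\beta\varphi^{-1}(x,\tau)\le\varphi^{-1}(y,\tau+h(x)+h(y))$ for all $\tau\in[0,\sigma]$. *)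

theory Defs
  imports "HOL-Analysis.Analysis"
begin

text \<open>Omega is a Lebesgue measurable subset of a Euclidean space; phi :: 'a => real => ennreal
  models a function Omega x [0,oo) -> [0,oo]; only arguments t >= 0 are relevant.\<close>

definition ae_in :: "'a::euclidean_space set \<Rightarrow> ('a \<Rightarrow> bool) \<Rightarrow> bool" where
  "ae_in \<Omega> P \<longleftrightarrow> (\<exists>N \<in> null_sets lebesgue. \<forall>x \<in> \<Omega> - N. P x)"

definition ae2_in :: "'a::euclidean_space set \<Rightarrow> ('a \<Rightarrow> 'a \<Rightarrow> bool) \<Rightarrow> bool" where
  "ae2_in \<Omega> P \<longleftrightarrow> (\<exists>N \<in> null_sets lebesgue. \<forall>x \<in> \<Omega> - N. \<forall>y \<in> \<Omega> - N. P x y)"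

definition almost_increasing_pos :: "real \<Rightarrow> (real \<Rightarrow> ennreal) \<Rightarrow> bool" where
  "almost_increasing_pos a g \<longleftrightarrow> (\<forall>s t. 0 < s \<longrightarrow> s \<le> t \<longrightarrow> g s \<le> ennreal a * g t)"

definition weak_Phi :: "'a::euclidean_space set \<Rightarrow> ('a \<Rightarrow> real \<Rightarrow> ennreal) \<Rightarrow> bool" where
  "weak_Phi \<Omega> \<phi> \<longleftrightarrow>
     (\<forall>f \<in> borel_measurable (lebesgue_on \<Omega>).
        (\<lambda>x. \<phi> x \<bar>f x\<bar>) \<in> borel_measurable (lebesgue_on \<Omega>)) \<and>
     (\<exists>a \<ge> 1. ae_in \<Omega> (\<lambda>x.
        (\<forall>s t. 0 \<le> s \<longrightarrow> s \<le> t \<longrightarrow> \<phi> x s \<le> \<phi> x t) \<and>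
        \<phi> x 0 = 0 \<and> (\<phi> x \<longlongrightarrow> 0) (at_right 0) \<and>
        (\<phi> x \<longlongrightarrow> top) at_top \<and>
        almost_increasing_pos a (\<lambda>t. \<phi> x t / ennreal t)))"

definition phi_inv :: "('a \<Rightarrow> real \<Rightarrow> ennreal) \<Rightarrow> 'a \<Rightarrow> real \<Rightarrow> real" where
  "phi_inv \<phi> x \<tau> = Inf {t. 0 \<le> t \<and> ennreal \<tau> \<le> \<phi> x t}"

definition L1_Linf_nonneg :: "'a::euclidean_space set \<Rightarrow> ('a \<Rightarrow> real) \<Rightarrow> bool" where
  "L1_Linf_nonneg \<Omega> h \<longleftrightarrow> integrable (lebesgue_on \<Omega>) h \<and>
     (\<exists>C. AE x in lebesgue_on \<Omega>. \<bar>h x\<bar> \<le> C) \<and>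
     (AE x in lebesgue_on \<Omega>. 0 \<le> h x)"

definition cond_A0 :: "'a::euclidean_space set \<Rightarrow> ('a \<Rightarrow> real \<Rightarrow> ennreal) \<Rightarrow> bool" where
  "cond_A0 \<Omega> \<phi> \<longleftrightarrow> (\<exists>\<beta>. 0 < \<beta> \<and> \<beta> \<le> 1 \<and>
     ae_in \<Omega> (\<lambda>x. \<beta> \<le> phi_inv \<phi> x 1 \<and> phi_inv \<phi> x 1 \<le> 1 / \<beta>))"

definition cond_A2 :: "'a::euclidean_space set \<Rightarrow> ('a \<Rightarrow> real \<Rightarrow> ennreal) \<Rightarrow> bool" where
  "cond_A2 \<Omega> \<phi> \<longleftrightarrow> (\<forall>\<sigma> > 0. \<exists>\<beta> h. 0 < \<beta> \<and> \<beta> \<le> 1 \<and> L1_Linf_nonneg \<Omega> h \<and>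
     ae2_in \<Omega> (\<lambda>x y. \<forall>\<tau>. 0 \<le> \<tau> \<and> \<tau> \<le> \<sigma> \<longrightarrow>
        \<beta> * phi_inv \<phi> x \<tau> \<le> phi_inv \<phi> y (\<tau> + h x + h y)))"

definition cond_2 :: "'a::euclidean_space set \<Rightarrow> ('a \<Rightarrow> real \<Rightarrow> ennreal) \<Rightarrow> bool" where
  "cond_2 \<Omega> \<phi> \<longleftrightarrow> (\<forall>\<sigma> > 0. \<exists>\<beta> h. 0 < \<beta> \<and> \<beta> \<le> 1 \<and> L1_Linf_nonneg \<Omega> h \<and>
     ae2_in \<Omega> (\<lambda>x y. \<forall>t \<ge> 0. \<phi> y t \<le> ennreal \<sigma> \<longrightarrow>
        \<phi> x (\<beta> * t) \<le> \<phi> y t + ennreal (h x + h y)))"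

definition cond_3 :: "'a::euclidean_space set \<Rightarrow> ('a \<Rightarrow> real \<Rightarrow> ennreal) \<Rightarrow> bool" where
  "cond_3 \<Omega> \<phi> \<longleftrightarrow> (\<forall>\<sigma> > 0. \<exists>\<beta> h. 0 < \<beta> \<and> \<beta> \<le> 1 \<and> L1_Linf_nonneg \<Omega> h \<and>
     ae2_in \<Omega> (\<lambda>x y. \<forall>\<tau>. 0 \<le> \<tau> \<and> \<tau> \<le> \<sigma> \<longrightarrow>
        \<beta> * phi_inv \<phi> x (max \<tau> (h x + h y)) \<le> phi_inv \<phi> y (max \<tau> (h x + h y))))"

definition cond_4 :: "'a::euclidean_space set \<Rightarrow> ('a \<Rightarrow> real \<Rightarrow> ennreal) \<Rightarrow> bool" where
  "cond_4 \<Omega> \<phi> \<longleftrightarrow> (\<forall>\<sigma> > 0. \<exists>\<beta> h. 0 < \<beta> \<and> \<beta> \<le> 1 \<and> L1_Linf_nonneg \<Omega> h \<and>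
     (AE x in lebesgue_on \<Omega>. h x \<le> \<sigma> / 2) \<and>
     ae2_in \<Omega> (\<lambda>x y. \<forall>\<tau>. h x + h y \<le> \<tau> \<and> \<tau> \<le> \<sigma> \<longrightarrow>
        \<beta> * phi_inv \<phi> x \<tau> \<le> phi_inv \<phi> y \<tau>))"

definition cond_5 :: "'a::euclidean_space set \<Rightarrow> ('a \<Rightarrow> real \<Rightarrow> ennreal) \<Rightarrow> bool" where
  "cond_5 \<Omega> \<phi> \<longleftrightarrow> cond_A0 \<Omega> \<phi> \<and>
    (\<forall>\<sigma> > 0. \<exists>\<beta> h. 0 < \<beta> \<and> \<beta> \<le> 1 \<and> L1_Linf_nonneg \<Omega> h \<and>
     ae2_in \<Omega> (\<lambda>x y. \<forall>\<tau>. h x + h y \<le> \<tau> \<and> \<tau> \<le> \<sigma> \<longrightarrow>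
        \<beta> * phi_inv \<phi> x \<tau> \<le> phi_inv \<phi> y \<tau>))"

end

theory Submission
  imports Defs
begin


definition goodpt :: "real \<Rightarrow> ('a \<Rightarrow> real \<Rightarrow> ennreal) \<Rightarrow> 'a \<Rightarrow> bool" where
  "goodpt a \<phi> x \<longleftrightarrow> (\<forall>s t. 0 \<le> s \<longrightarrow> s \<le> t \<longrightarrow> \<phi> x s \<le> \<phi> x t) \<and>
        \<phi> x 0 = 0 \<and> (\<phi> x \<longlongrightarrow> 0) (at_right 0) \<and>
        (\<phi> x \<longlongrightarrow> top) at_top \<and>
        almost_increasing_pos a (\<lambda>t. \<phi> x t / ennreal t)"

lemma dense_mult_le:
  fixes P Q c :: real
  assumes "0 < c" "\<And>t. P < t \<Longrightarrow> Q \<le> c * t"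
  shows "Q \<le> c * P"
proof -
  have "Q / c \<le> P"
  proof (rule dense_ge)
    fix t assume "P < t" then have "Q \<le> c * t" by (rule assms(2))
    then show "Q / c \<le> t" using assms(1) by (simp add: divide_le_eq mult.commute)
  qed
  then show ?thesis using assms(1) by (simp add: divide_le_eq mult.commute)
qed

context
  fixes a :: real and \<phi> :: "'a \<Rightarrow> real \<Rightarrow> ennreal" and x :: 'a
  assumes g: "goodpt a \<phi> x"
begin

lemma g_mono: "0 \<le> s \<Longrightarrow> s \<le> t \<Longrightarrow> \<phi> x s \<le> \<phi> x t"
  using g unfolding goodpt_def by blast

lemma S_ne: "{t. 0 \<le> t \<and> ennreal \<tau> \<le> \<phi> x t} \<noteq> {}"
proof -
  have "(\<phi> x \<longlongrightarrow> top) at_top" using g unfolding goodpt_def by blast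
  moreover have "ennreal \<tau> < top" by simp
  ultimately have "eventually (\<lambda>t. ennreal \<tau> < \<phi> x t) at_top" by (rule order_tendstoD(1))
  then obtain N where "\<And>t. t \<ge> N \<Longrightarrow> ennreal \<tau> < \<phi> x t" by (auto simp: eventually_at_top_linorder)
  then have "0 \<le> max N 0 \<and> ennreal \<tau> \<le> \<phi> x (max N 0)" by (meson less_imp_le max.cobounded1 max.cobounded2)
  then show ?thesis by blast
qed

lemma S_bdd: "bdd_below {t. 0 \<le> t \<and> ennreal \<tau> \<le> \<phi> x t}"
  by (rule bdd_belowI[of _ 0]) auto

lemma inv_nonneg: "0 \<le> phi_inv \<phi> x \<tau>"
  unfolding phi_inv_def by (rule cInf_greatest[OF S_ne]) auto

lemma inv_le: "0 \<le> t \<Longrightarrow> ennreal \<tau> \<le> \<phi> x t \<Longrightarrow> phi_inv \<phi> x \<tau> \<le> t"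
  unfolding phi_inv_def by (rule cInf_lower[OF _ S_bdd]) auto

lemma inv_gt: assumes "phi_inv \<phi> x \<tau> < t" shows "ennreal \<tau> \<le> \<phi> x t"
proof -
  from assms obtain s where s: "0 \<le> s" "ennreal \<tau> \<le> \<phi> x s" "s < t"
    unfolding phi_inv_def cInf_less_iff[OF S_ne S_bdd] by auto
  then show ?thesis using g_mono[of s t] by auto
qed

lemma inv_ge: assumes "\<phi> x t < ennreal \<tau>" shows "t \<le> phi_inv \<phi> x \<tau>"
  using inv_gt[of \<tau> t] assms by (meson not_le)

lemma inv_mono: assumes "\<tau>1 \<le> \<tau>2" shows "phi_inv \<phi> x \<tau>1 \<le> phi_inv \<phi> x \<tau>2"
proof -
  have "phi_inv \<phi> x \<tau>1 \<le> 1 * phi_inv \<phi> x \<tau>2"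
  proof (rule dense_mult_le)
    fix t assume t: "phi_inv \<phi> x \<tau>2 < t"
    then have "ennreal \<tau>1 \<le> \<phi> x t" using inv_gt[OF t] assms order_trans ennreal_leI by blast
    moreover have "0 \<le> t" using t inv_nonneg[of \<tau>2] by linarith
    ultimately show "phi_inv \<phi> x \<tau>1 \<le> 1 * t" using inv_le by simp
  qed simp
  then show ?thesis by simp
qed

lemma inv_zero: assumes "\<tau> \<le> 0" shows "phi_inv \<phi> x \<tau> = 0"
proof -
  have "ennreal \<tau> = 0" using assms by (simp add: ennreal_eq_0_iff)
  then have "phi_inv \<phi> x \<tau> \<le> 0" by (intro inv_le) auto
  then show ?thesis using inv_nonneg[of \<tau>] by linarith
qed

lemma inv_pos: assumes "0 < \<tau>" shows "0 < phi_inv \<phi> x \<tau>"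
proof -
  have "(\<phi> x \<longlongrightarrow> 0) (at_right 0)" using g unfolding goodpt_def by blast
  moreover have "0 < ennreal \<tau>" using assms by simp
  ultimately have "eventually (\<lambda>t. \<phi> x t < ennreal \<tau>) (at_right (0::real))" by (rule order_tendstoD(2))
  then obtain b::real where b: "b > 0" "\<And>y. y > 0 \<Longrightarrow> y < b \<Longrightarrow> \<phi> x y < ennreal \<tau>"
    unfolding eventually_at_right_field by auto
  then have "b/2 \<le> phi_inv \<phi> x \<tau>" by (intro inv_ge) auto
  then show ?thesis using b by linarith
qed

lemma inv_scale:
  assumes a1: "1 \<le> a" and l: "1 \<le> l" and m: "0 \<le> m"
  shows "phi_inv \<phi> x (l * m) \<le> (a * l) * phi_inv \<phi> x m"
proof (rule dense_mult_le)
  show "0 < a * l" using a1 l by simp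
  fix t assume t: "phi_inv \<phi> x m < t"
  have t0: "0 < t" using t inv_nonneg[of m] by linarith
  have pt: "ennreal m \<le> \<phi> x t" by (rule inv_gt[OF t])
  have alt: "0 < a * l * t" using a1 l t0 by simp
  have "ennreal (l * m) \<le> \<phi> x (a * l * t)"
  proof (cases "\<phi> x (a * l * t)" rule: ennreal_cases)
    case (real q)
    have "1 * 1 \<le> a * l" using a1 l by (intro mult_mono) auto
    then have "1 * t \<le> (a * l) * t" using t0 by (intro mult_right_mono) auto
    then have tle: "t \<le> a * l * t" by simp
    have "\<phi> x t \<le> \<phi> x (a * l * t)" using g_mono[OF _ tle] t0 by simp
    then obtain p where p: "\<phi> x t = ennreal p" "0 \<le> p" "p \<le> q"
    proof (cases "\<phi> x t" rule: ennreal_cases)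
      case (real p)
      then show ?thesis using that \<open>0 \<le> q\<close> \<open>\<phi> x t \<le> \<phi> x (a * l * t)\<close> \<open>\<phi> x (a * l * t) = ennreal q\<close>
        by (simp add: ennreal_le_iff)
    next
      case top
      then show ?thesis using \<open>\<phi> x t \<le> \<phi> x (a * l * t)\<close> \<open>\<phi> x (a * l * t) = ennreal q\<close> by (simp add: top_unique)
    qed
    have ai: "almost_increasing_pos a (\<lambda>t. \<phi> x t / ennreal t)" using g unfolding goodpt_def by blast
    then have "\<phi> x t / ennreal t \<le> ennreal a * (\<phi> x (a*l*t) / ennreal (a*l*t))"
      unfolding almost_increasing_pos_def using t0 tle by blast
    moreover have "\<phi> x t / ennreal t = ennreal (p/t)" using p t0 by (simp add: divide_ennreal)
    moreover have "\<phi> x (a*l*t) / ennreal (a*l*t) = ennreal (q/(a*l*t))"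
      using real alt by (simp add: divide_ennreal)
    moreover have "ennreal a * ennreal (q/(a*l*t)) = ennreal (a * (q/(a*l*t)))"
      using a1 by (subst ennreal_mult'[symmetric]) auto
    ultimately have "ennreal (p / t) \<le> ennreal (a * (q / (a*l*t)))" by simp
    moreover have "0 \<le> a * (q / (a*l*t))" using a1 alt real by (intro mult_nonneg_nonneg divide_nonneg_pos) auto
    ultimately have "p / t \<le> a * (q / (a*l*t))"
      using ennreal_le_iff by blast
    then have "p / t \<le> q / (l * t)" using a1 by (simp add: field_simps)
    then have "l * p \<le> q" using t0 l by (simp add: field_simps)
    moreover have "m \<le> p" using pt p m by simp
    then have "l * m \<le> l * p" using l by (intro mult_left_mono) auto
    ultimately have "l * m \<le> q" by linarith
    then show ?thesis using real by simp
  qed simp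
  then show "phi_inv \<phi> x (l * m) \<le> a * l * t" by (intro inv_le) (use alt in auto)
qed

end


lemma AE_to_null:
  assumes "\<Omega> \<in> sets lebesgue" "AE x in lebesgue_on \<Omega>. P x"
  shows "\<exists>N\<in>null_sets lebesgue. \<forall>x\<in>\<Omega> - N. P x"
proof -
  from assms(2) obtain N where N: "{x \<in> space (lebesgue_on \<Omega>). \<not> P x} \<subseteq> N"
    "emeasure (lebesgue_on \<Omega>) N = 0" "N \<in> sets (lebesgue_on \<Omega>)" by (rule AE_E)
  then have "N \<in> null_sets (lebesgue_on \<Omega>)" by auto
  then have "N \<in> null_sets lebesgue" using null_sets_restrict_space[OF assms(1)] by blast
  moreover have "\<forall>x\<in>\<Omega> - N. P x" using N(1) by auto
  ultimately show ?thesis by blast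
qed

lemma h_props:
  assumes "\<Omega> \<in> sets lebesgue" "L1_Linf_nonneg \<Omega> h"
  shows "\<exists>C\<ge>0. \<exists>N\<in>null_sets lebesgue. \<forall>x\<in>\<Omega> - N. 0 \<le> h x \<and> h x \<le> C"
proof -
  from assms(2) obtain C where "AE x in lebesgue_on \<Omega>. \<bar>h x\<bar> \<le> C" "AE x in lebesgue_on \<Omega>. 0 \<le> h x"
    unfolding L1_Linf_nonneg_def by blast
  then have "AE x in lebesgue_on \<Omega>. 0 \<le> h x \<and> h x \<le> max C 0" by eventually_elim auto
  from AE_to_null[OF assms(1) this] show ?thesis by (intro exI[of _ "max C 0"]) auto
qed

lemma weak_good:
  assumes "weak_Phi \<Omega> \<phi>"
  shows "\<exists>a\<ge>1. \<exists>N\<in>null_sets lebesgue. \<forall>x\<in>\<Omega> - N. goodpt a \<phi> x"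
  using assms unfolding weak_Phi_def ae_in_def goodpt_def by blast

lemma L1_min:
  assumes "\<Omega> \<in> sets lebesgue" "L1_Linf_nonneg \<Omega> h" "0 \<le> c"
  shows "L1_Linf_nonneg \<Omega> (\<lambda>x. min (h x) c)"
proof -
  from assms(2) obtain C where hi: "integrable (lebesgue_on \<Omega>) h"
    and b: "AE x in lebesgue_on \<Omega>. \<bar>h x\<bar> \<le> C" and p: "AE x in lebesgue_on \<Omega>. 0 \<le> h x"
    unfolding L1_Linf_nonneg_def by blast
  have hm: "h \<in> borel_measurable (lebesgue_on \<Omega>)" using hi by (rule borel_measurable_integrable)
  have "integrable (lebesgue_on \<Omega>) (\<lambda>x. min (h x) c)"
  proof (rule Bochner_Integration.integrable_bound[OF hi])
    show "(\<lambda>x. min (h x) c) \<in> borel_measurable (lebesgue_on \<Omega>)" using hm by measurable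
    show "AE x in lebesgue_on \<Omega>. norm (min (h x) c) \<le> norm (h x)"
      using p by eventually_elim (use assms(3) in auto)
  qed
  moreover have "AE x in lebesgue_on \<Omega>. \<bar>min (h x) c\<bar> \<le> C"
    using p b by eventually_elim (use assms(3) in auto)
  moreover have "AE x in lebesgue_on \<Omega>. 0 \<le> min (h x) c"
    using p by eventually_elim (use assms(3) in auto)
  ultimately show ?thesis unfolding L1_Linf_nonneg_def by blast
qed



lemma scale_div: fixes b i k j :: real assumes "0 < k" "b * i \<le> k * j" shows "(b / k) * i \<le> j"
proof -
  have "(b / k) * i = (b * i) / k" by simp
  also have "\<dots> \<le> (k * j) / k" using assms by (intro divide_right_mono) auto
  also have "\<dots> = j" using assms by simp
  finally show ?thesis .
qed

lemma div_left: fixes b i k j :: real assumes "0 < b" "b * i \<le> k * j" shows "i \<le> (k / b) * j"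
proof -
  have "i = (b * i) / b" using assms by simp
  also have "\<dots> \<le> (k * j) / b" using assms by (intro divide_right_mono) auto
  also have "\<dots> = (k / b) * j" by simp
  finally show ?thesis .
qed

lemma shrink: fixes b b' i j :: real assumes "b' \<le> b" "0 \<le> i" "b * i \<le> j" shows "b' * i \<le> j"
  using mult_right_mono[OF assms(1,2)] assms(3) by linarith

context
  fixes \<Omega> :: "'a::euclidean_space set" and \<phi> :: "'a \<Rightarrow> real \<Rightarrow> ennreal" and a :: real and N0 :: "'a set"
  assumes Om: "\<Omega> \<in> sets lebesgue" and a1: "1 \<le> a" and N0: "N0 \<in> null_sets lebesgue"
    and gd: "\<And>x. x \<in> \<Omega> - N0 \<Longrightarrow> goodpt a \<phi> x"
begin

lemma ratio_A0:
  assumes K: "0 < K" and N: "N \<in> null_sets lebesgue"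
    and r: "\<And>x y. x \<in> \<Omega> - N \<Longrightarrow> y \<in> \<Omega> - N \<Longrightarrow> phi_inv \<phi> x 1 \<le> K * phi_inv \<phi> y 1"
  shows "cond_A0 \<Omega> \<phi>"
proof -
  define M where "M = N \<union> N0"
  have M: "M \<in> null_sets lebesgue" unfolding M_def using N N0 by auto
  show ?thesis
  proof (cases "\<Omega> - M = {}")
    case True
    then show ?thesis unfolding cond_A0_def ae_in_def using M
      by (intro exI[of _ 1]) auto
  next
    case False
    then obtain y0 where y0: "y0 \<in> \<Omega> - M" by blast
    define v where "v = phi_inv \<phi> y0 1"
    have v: "0 < v" unfolding v_def using gd[of y0] y0 inv_pos[of a \<phi> y0 1] by (auto simp: M_def)
    define \<beta> where "\<beta> = min 1 (min (v / K) (1 / (K * v)))"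
    have b0: "0 < \<beta>" unfolding \<beta>_def using v K by simp
    have "ae_in \<Omega> (\<lambda>x. \<beta> \<le> phi_inv \<phi> x 1 \<and> phi_inv \<phi> x 1 \<le> 1 / \<beta>)"
      unfolding ae_in_def
    proof (intro bexI[OF _ M] ballI conjI)
      fix x assume x: "x \<in> \<Omega> - M"
      have xy: "x \<in> \<Omega> - N" "y0 \<in> \<Omega> - N" using x y0 by (auto simp: M_def)
      have "v \<le> K * phi_inv \<phi> x 1" using r[OF xy(2) xy(1)] by (simp add: v_def)
      then have "v / K \<le> phi_inv \<phi> x 1" using K by (simp add: divide_le_eq mult.commute)
      then show "\<beta> \<le> phi_inv \<phi> x 1" unfolding \<beta>_def by linarith
      have i: "phi_inv \<phi> x 1 \<le> K * v" using r[OF xy(1) xy(2)] by (simp add: v_def)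
      have "\<beta> \<le> 1 / (K * v)" unfolding \<beta>_def by linarith
      then have "\<beta> * (K * v) \<le> 1" using K v by (simp add: le_divide_eq)
      then have "K * v \<le> 1 / \<beta>" using b0 by (simp add: le_divide_eq mult.commute)
      then show "phi_inv \<phi> x 1 \<le> 1 / \<beta>" using i by linarith
    qed
    then show ?thesis unfolding cond_A0_def using b0
      by (intro exI[of _ \<beta>]) (auto simp: \<beta>_def)
  qed
qed

lemma compar:
  assumes A0: "cond_A0 \<Omega> \<phi>" and e: "0 < \<epsilon>" "\<epsilon> \<le> 1" and M1: "1 \<le> M"
  shows "\<exists>c>0. c \<le> 1 \<and> (\<exists>N\<in>null_sets lebesgue. \<forall>x\<in>\<Omega> - N. \<forall>y\<in>\<Omega> - N. \<forall>\<tau> \<tau>'.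
           \<epsilon> \<le> \<tau> \<and> \<tau> \<le> M \<and> \<epsilon> \<le> \<tau>' \<and> \<tau>' \<le> M \<longrightarrow> c * phi_inv \<phi> x \<tau> \<le> phi_inv \<phi> y \<tau>')"
proof -
  from A0 obtain \<beta>0 NA where b0: "0 < \<beta>0" "\<beta>0 \<le> 1" and NA: "NA \<in> null_sets lebesgue"
    and bA: "\<And>x. x \<in> \<Omega> - NA \<Longrightarrow> \<beta>0 \<le> phi_inv \<phi> x 1 \<and> phi_inv \<phi> x 1 \<le> 1 / \<beta>0"
    unfolding cond_A0_def ae_in_def by blast
  define L where "L = \<beta>0 * \<epsilon> / a"
  define U where "U = a * M / \<beta>0"
  have U0: "0 < U" unfolding U_def using a1 M1 b0 by simp
  have L0: "0 < L" unfolding L_def using a1 e b0 by simp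
  define c where "c = min 1 (L / U)"
  have bounds: "L \<le> phi_inv \<phi> x \<tau> \<and> phi_inv \<phi> x \<tau> \<le> U"
    if x: "x \<in> \<Omega> - (NA \<union> N0)" and t: "\<epsilon> \<le> \<tau>" "\<tau> \<le> M" for x \<tau>
  proof -
    have g: "goodpt a \<phi> x" using gd x by auto
    have A: "\<beta>0 \<le> phi_inv \<phi> x 1" "phi_inv \<phi> x 1 \<le> 1 / \<beta>0" using bA x by auto
    have "phi_inv \<phi> x ((1/\<epsilon>) * \<epsilon>) \<le> (a * (1/\<epsilon>)) * phi_inv \<phi> x \<epsilon>"
      using inv_scale[OF g a1, of "1/\<epsilon>" \<epsilon>] e by simp
    then have "\<beta>0 \<le> (a / \<epsilon>) * phi_inv \<phi> x \<epsilon>" using e A by simp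
    then have "\<beta>0 * \<epsilon> \<le> a * phi_inv \<phi> x \<epsilon>" using e by (simp add: field_simps)
    then have "L \<le> phi_inv \<phi> x \<epsilon>" unfolding L_def using a1 by (simp add: divide_le_eq mult.commute)
    moreover have "phi_inv \<phi> x \<epsilon> \<le> phi_inv \<phi> x \<tau>" using inv_mono[OF g t(1)] .
    moreover have "phi_inv \<phi> x (M * 1) \<le> (a * M) * phi_inv \<phi> x 1"
      using inv_scale[OF g a1 M1, of 1] by simp
    then have "phi_inv \<phi> x M \<le> (a * M) * (1 / \<beta>0)"
      using A a1 M1 by (smt (verit) mult_left_mono mult_nonneg_nonneg)
    then have "phi_inv \<phi> x M \<le> U" unfolding U_def by simp
    moreover have "phi_inv \<phi> x \<tau> \<le> phi_inv \<phi> x M" using inv_mono[OF g t(2)] .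
    ultimately show ?thesis by linarith
  qed
  show ?thesis
  proof (intro exI[of _ c] conjI bexI[of _ "NA \<union> N0"] ballI allI impI)
    show "0 < c" "c \<le> 1" unfolding c_def using L0 U0 by auto
    show "NA \<union> N0 \<in> null_sets lebesgue" using NA N0 by auto
    fix x y \<tau> \<tau>' assume x: "x \<in> \<Omega> - (NA \<union> N0)" and y: "y \<in> \<Omega> - (NA \<union> N0)"
      and t: "\<epsilon> \<le> \<tau> \<and> \<tau> \<le> M \<and> \<epsilon> \<le> \<tau>' \<and> \<tau>' \<le> M"
    have bx: "L \<le> phi_inv \<phi> x \<tau>" "phi_inv \<phi> x \<tau> \<le> U" using bounds[OF x] t by auto
    have by': "L \<le> phi_inv \<phi> y \<tau>'" using bounds[OF y] t by auto
    have "c * phi_inv \<phi> x \<tau> \<le> (L / U) * phi_inv \<phi> x \<tau>"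
      unfolding c_def using bx L0 by (intro mult_right_mono) auto
    also have "\<dots> \<le> (L / U) * U" using bx L0 U0 by (intro mult_left_mono) auto
    also have "\<dots> = L" using U0 by simp
    finally show "c * phi_inv \<phi> x \<tau> \<le> phi_inv \<phi> y \<tau>'" using by' by linarith
  qed
qed

lemma A2_imp_2: assumes "cond_A2 \<Omega> \<phi>" shows "cond_2 \<Omega> \<phi>"
  unfolding cond_2_def
proof (intro allI impI)
  fix \<sigma> :: real assume s0: "0 < \<sigma>"
  from assms obtain \<beta> h N where b: "0 < \<beta>" "\<beta> \<le> 1" and hL: "L1_Linf_nonneg \<Omega> h"
    and N: "N \<in> null_sets lebesgue"
    and A: "\<And>x y \<tau>. x \<in> \<Omega> - N \<Longrightarrow> y \<in> \<Omega> - N \<Longrightarrow> 0 \<le> \<tau> \<Longrightarrow> \<tau> \<le> \<sigma> + 1 \<Longrightarrow>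
              \<beta> * phi_inv \<phi> x \<tau> \<le> phi_inv \<phi> y (\<tau> + h x + h y)"
    unfolding cond_A2_def ae2_in_def using s0
    by (metis (no_types, lifting) add_pos_pos zero_less_one)
  from h_props[OF Om hL] obtain C Nh where Nh: "Nh \<in> null_sets lebesgue"
    and hC: "\<And>x. x \<in> \<Omega> - Nh \<Longrightarrow> 0 \<le> h x \<and> h x \<le> C" by blast
  define N' where "N' = N \<union> Nh \<union> N0"
  have N': "N' \<in> null_sets lebesgue" unfolding N'_def using N Nh N0 by auto
  show "\<exists>\<beta> h. 0 < \<beta> \<and> \<beta> \<le> 1 \<and> L1_Linf_nonneg \<Omega> h \<and>
     ae2_in \<Omega> (\<lambda>x y. \<forall>t \<ge> 0. \<phi> y t \<le> ennreal \<sigma> \<longrightarrow>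
        \<phi> x (\<beta> * t) \<le> \<phi> y t + ennreal (h x + h y))"
    unfolding ae2_in_def
  proof (intro exI[of _ "\<beta>/2"] exI[of _ h] conjI bexI[OF _ N'] ballI allI impI)
    show "0 < \<beta>/2" "\<beta>/2 \<le> 1" "L1_Linf_nonneg \<Omega> h" using b hL by auto
    fix x y t assume x: "x \<in> \<Omega> - N'" and y: "y \<in> \<Omega> - N'" and t: "0 \<le> t"
      and py: "\<phi> y t \<le> ennreal \<sigma>"
    have gx: "goodpt a \<phi> x" and gy: "goodpt a \<phi> y" using gd x y by (auto simp: N'_def)
    have hx: "0 \<le> h x" and hy: "0 \<le> h y" using hC x y by (auto simp: N'_def)
    show "\<phi> x (\<beta> / 2 * t) \<le> \<phi> y t + ennreal (h x + h y)"
    proof (rule ccontr)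
      assume "\<not> ?thesis"
      then have lt: "\<phi> y t + ennreal (h x + h y) < \<phi> x (\<beta> / 2 * t)" by simp
      have tpos: "0 < t"
      proof (rule ccontr)
        assume "\<not> 0 < t" then have "t = 0" using t by simp
        then show False using lt gx unfolding goodpt_def by simp
      qed
      obtain p where p: "\<phi> y t = ennreal p" "0 \<le> p" "p \<le> \<sigma>"
      proof (cases "\<phi> y t" rule: ennreal_cases)
        case (real r) then show ?thesis using that py s0 by (simp add: ennreal_le_iff)
      next
        case top then show ?thesis using py by (simp add: top_unique)
      qed
      have "ennreal (p + (h x + h y)) < \<phi> x (\<beta> / 2 * t)" using lt p hx hy by simp
      then obtain r where r1: "ennreal (p + (h x + h y)) < r" and r2: "r < \<phi> x (\<beta> / 2 * t)"
        using dense by blast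
      obtain r' where r': "r = ennreal r'" "0 \<le> r'"
        using r2 by (cases r rule: ennreal_cases) auto
      have rp: "p + (h x + h y) < r'" using r1 r' p hx hy ennreal_less_iff[of "p + (h x + h y)" r'] by simp
      define \<tau> where "\<tau> = min (\<sigma> + 1) (r' - (h x + h y))"
      have tau: "0 \<le> \<tau>" "\<tau> \<le> \<sigma> + 1" "p < \<tau>" "\<tau> + h y + h x \<le> r'"
        unfolding \<tau>_def using rp p hx hy by auto
      have yN: "y \<in> \<Omega> - N" and xN: "x \<in> \<Omega> - N" using x y by (auto simp: N'_def)
      have 1: "\<beta> * phi_inv \<phi> y \<tau> \<le> phi_inv \<phi> x (\<tau> + h y + h x)"
        using A[OF yN xN tau(1) tau(2)] .
      have e: "ennreal (\<tau> + h y + h x) \<le> \<phi> x (\<beta> / 2 * t)"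
        using tau(4) r' r2 by (meson ennreal_leI less_imp_le order_trans)
      have 2: "phi_inv \<phi> x (\<tau> + h y + h x) \<le> \<beta> / 2 * t"
        by (rule inv_le[OF gx _ e]) (use b t in simp)
      have "\<phi> y t < ennreal \<tau>" using p tau by (simp add: ennreal_lessI)
      then have 3: "t \<le> phi_inv \<phi> y \<tau>" using inv_ge[OF gy] by blast
      have "\<beta> * t \<le> \<beta> * phi_inv \<phi> y \<tau>" by (rule mult_left_mono[OF 3]) (use b in simp)
      then have "\<beta> * t \<le> \<beta> / 2 * t" using 1 2 by linarith
      moreover have "0 < \<beta> * t" using b tpos by simp
      ultimately show False by linarith
    qed
  qed
qed

lemma two_imp_A2: assumes "cond_2 \<Omega> \<phi>" shows "cond_A2 \<Omega> \<phi>"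
  unfolding cond_A2_def
proof (intro allI impI)
  fix \<sigma> :: real assume s0: "0 < \<sigma>"
  from assms s0 obtain \<beta> h where b: "0 < \<beta>" "\<beta> \<le> 1" and hL: "L1_Linf_nonneg \<Omega> h"
    and ae: "ae2_in \<Omega> (\<lambda>x y. \<forall>t \<ge> 0. \<phi> y t \<le> ennreal \<sigma> \<longrightarrow>
        \<phi> x (\<beta> * t) \<le> \<phi> y t + ennreal (h x + h y))"
    unfolding cond_2_def by blast
  from ae obtain N where N: "N \<in> null_sets lebesgue"
    and B': "\<forall>x\<in>\<Omega> - N. \<forall>y\<in>\<Omega> - N. \<forall>t \<ge> 0. \<phi> y t \<le> ennreal \<sigma> \<longrightarrow>
        \<phi> x (\<beta> * t) \<le> \<phi> y t + ennreal (h x + h y)"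
    unfolding ae2_in_def by blast
  have B: "\<And>x y t. x \<in> \<Omega> - N \<Longrightarrow> y \<in> \<Omega> - N \<Longrightarrow> 0 \<le> t \<Longrightarrow> \<phi> y t \<le> ennreal \<sigma> \<Longrightarrow>
              \<phi> x (\<beta> * t) \<le> \<phi> y t + ennreal (h x + h y)"
    using B' by blast
  from h_props[OF Om hL] obtain C Nh where Nh: "Nh \<in> null_sets lebesgue"
    and hC: "\<And>x. x \<in> \<Omega> - Nh \<Longrightarrow> 0 \<le> h x \<and> h x \<le> C" by blast
  define N' where "N' = N \<union> Nh \<union> N0"
  have N': "N' \<in> null_sets lebesgue" unfolding N'_def using N Nh N0 by auto
  show "\<exists>\<beta> h. 0 < \<beta> \<and> \<beta> \<le> 1 \<and> L1_Linf_nonneg \<Omega> h \<and>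
     ae2_in \<Omega> (\<lambda>x y. \<forall>\<tau>. 0 \<le> \<tau> \<and> \<tau> \<le> \<sigma> \<longrightarrow>
        \<beta> * phi_inv \<phi> x \<tau> \<le> phi_inv \<phi> y (\<tau> + h x + h y))"
    unfolding ae2_in_def
  proof (intro exI[of _ "\<beta>"] exI[of _ h] conjI bexI[OF _ N'] ballI allI impI)
    show "0 < \<beta>" "\<beta> \<le> 1" "L1_Linf_nonneg \<Omega> h" using b hL by auto
    fix x y \<tau> assume x: "x \<in> \<Omega> - N'" and y: "y \<in> \<Omega> - N'" and tau: "0 \<le> \<tau> \<and> \<tau> \<le> \<sigma>"
    have gx: "goodpt a \<phi> x" and gy: "goodpt a \<phi> y" using gd x y by (auto simp: N'_def)
    have hx: "0 \<le> h x" and hy: "0 \<le> h y" using hC x y by (auto simp: N'_def)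
    have xN: "x \<in> \<Omega> - N" and yN: "y \<in> \<Omega> - N" using x y by (auto simp: N'_def)
    have "phi_inv \<phi> x \<tau> \<le> (1 / \<beta>) * phi_inv \<phi> y (\<tau> + h x + h y)"
    proof (rule dense_mult_le)
      show "0 < 1 / \<beta>" using b by simp
      fix t assume t: "phi_inv \<phi> y (\<tau> + h x + h y) < t"
      have t0: "0 \<le> t" using t inv_nonneg[OF gy, of "\<tau> + h x + h y"] by linarith
      have pt: "ennreal (\<tau> + h x + h y) \<le> \<phi> y t" by (rule inv_gt[OF gy t])
      have "ennreal \<tau> \<le> \<phi> x (t / \<beta>)"
      proof (rule ccontr)
        assume "\<not> ?thesis"
        then have lt: "\<phi> x (t / \<beta>) < ennreal \<tau>" by simp
        obtain p where p: "\<phi> x (t / \<beta>) = ennreal p" "0 \<le> p" "p < \<tau>"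
        proof (cases "\<phi> x (t / \<beta>)" rule: ennreal_cases)
          case (real r)
          then have "r < \<tau>" using lt ennreal_less_iff[of r \<tau>] by simp
          then show ?thesis using that real by blast
        next
          case top then show ?thesis using lt by simp
        qed
        have "\<phi> x (t / \<beta>) \<le> ennreal \<sigma>" using p tau by simp
        then have "\<phi> y (\<beta> * (t / \<beta>)) \<le> \<phi> x (t / \<beta>) + ennreal (h y + h x)"
          using b t0 by (intro B[OF yN xN]) auto
        moreover have "\<beta> * (t / \<beta>) = t" using b by simp
        moreover have "\<phi> x (t / \<beta>) + ennreal (h y + h x) = ennreal (p + (h y + h x))"
          using p hx hy by (simp add: ennreal_plus)
        ultimately have "\<phi> y t \<le> ennreal (p + (h y + h x))" by simp
        moreover have "ennreal (p + (h y + h x)) < ennreal (\<tau> + h x + h y)"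
          using p hx hy tau by (intro ennreal_lessI) auto
        ultimately have "\<phi> y t < ennreal (\<tau> + h x + h y)" by (rule le_less_trans)
        then show False using pt by (simp add: not_le[symmetric])
      qed
      then have "phi_inv \<phi> x \<tau> \<le> t / \<beta>" by (intro inv_le[OF gx]) (use t0 b in simp_all)
      then show "phi_inv \<phi> x \<tau> \<le> 1 / \<beta> * t" by simp
    qed
    then have "\<beta> * phi_inv \<phi> x \<tau> \<le> \<beta> * ((1 / \<beta>) * phi_inv \<phi> y (\<tau> + h x + h y))"
      using b by (intro mult_left_mono) auto
    then show "\<beta> * phi_inv \<phi> x \<tau> \<le> phi_inv \<phi> y (\<tau> + h x + h y)" using b by simp
  qed
qed

lemma A2_imp_A0: assumes "cond_A2 \<Omega> \<phi>" shows "cond_A0 \<Omega> \<phi>"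
proof -
  from assms obtain \<beta> h where b: "0 < \<beta>" "\<beta> \<le> 1" and hL: "L1_Linf_nonneg \<Omega> h"
    and ae: "ae2_in \<Omega> (\<lambda>x y. \<forall>\<tau>. 0 \<le> \<tau> \<and> \<tau> \<le> 1 \<longrightarrow>
        \<beta> * phi_inv \<phi> x \<tau> \<le> phi_inv \<phi> y (\<tau> + h x + h y))"
    unfolding cond_A2_def by (meson zero_less_one)
  from ae obtain N where N: "N \<in> null_sets lebesgue"
    and B: "\<forall>x\<in>\<Omega> - N. \<forall>y\<in>\<Omega> - N. \<forall>\<tau>. 0 \<le> \<tau> \<and> \<tau> \<le> 1 \<longrightarrow>
        \<beta> * phi_inv \<phi> x \<tau> \<le> phi_inv \<phi> y (\<tau> + h x + h y)"
    unfolding ae2_in_def by blast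
  from h_props[OF Om hL] obtain C Nh where C: "0 \<le> C" and Nh: "Nh \<in> null_sets lebesgue"
    and hC: "\<And>x. x \<in> \<Omega> - Nh \<Longrightarrow> 0 \<le> h x \<and> h x \<le> C" by blast
  define M where "M = N \<union> Nh \<union> N0"
  have M: "M \<in> null_sets lebesgue" unfolding M_def using N Nh N0 by auto
  show ?thesis
  proof (rule ratio_A0[OF _ M])
    show "0 < a * (1 + 2 * C) / \<beta>" using a1 C b by simp
    fix x y assume x: "x \<in> \<Omega> - M" and y: "y \<in> \<Omega> - M"
    have gx: "goodpt a \<phi> x" and gy: "goodpt a \<phi> y" using gd x y by (auto simp: M_def)
    have hx: "0 \<le> h x" "h x \<le> C" and hy: "0 \<le> h y" "h y \<le> C" using hC x y by (auto simp: M_def)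
    have "\<beta> * phi_inv \<phi> x 1 \<le> phi_inv \<phi> y (1 + h x + h y)"
      using B x y by (auto simp: M_def)
    also have "\<dots> \<le> phi_inv \<phi> y ((1 + 2 * C) * 1)" using hx hy by (intro inv_mono[OF gy]) auto
    also have "\<dots> \<le> (a * (1 + 2 * C)) * phi_inv \<phi> y 1" using C by (intro inv_scale[OF gy a1]) auto
    finally show "phi_inv \<phi> x 1 \<le> a * (1 + 2 * C) / \<beta> * phi_inv \<phi> y 1"
      using b by (intro div_left) auto
  qed
qed

lemma A2_imp_3: assumes "cond_A2 \<Omega> \<phi>" shows "cond_3 \<Omega> \<phi>"
  unfolding cond_3_def
proof (intro allI impI)
  fix \<sigma> :: real assume s0: "0 < \<sigma>"
  have A0: "cond_A0 \<Omega> \<phi>" by (rule A2_imp_A0[OF assms])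
  from assms s0 obtain \<beta> h where b: "0 < \<beta>" "\<beta> \<le> 1" and hL: "L1_Linf_nonneg \<Omega> h"
    and ae: "ae2_in \<Omega> (\<lambda>x y. \<forall>\<tau>. 0 \<le> \<tau> \<and> \<tau> \<le> \<sigma> \<longrightarrow>
        \<beta> * phi_inv \<phi> x \<tau> \<le> phi_inv \<phi> y (\<tau> + h x + h y))"
    unfolding cond_A2_def by blast
  from ae obtain N where N: "N \<in> null_sets lebesgue"
    and B: "\<forall>x\<in>\<Omega> - N. \<forall>y\<in>\<Omega> - N. \<forall>\<tau>. 0 \<le> \<tau> \<and> \<tau> \<le> \<sigma> \<longrightarrow>
        \<beta> * phi_inv \<phi> x \<tau> \<le> phi_inv \<phi> y (\<tau> + h x + h y)"
    unfolding ae2_in_def by blast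
  from h_props[OF Om hL] obtain C Nh where C: "0 \<le> C" and Nh: "Nh \<in> null_sets lebesgue"
    and hC: "\<And>x. x \<in> \<Omega> - Nh \<Longrightarrow> 0 \<le> h x \<and> h x \<le> C" by blast
  define \<epsilon> where "\<epsilon> = min \<sigma> 1"
  define Mx where "Mx = max 1 (max \<sigma> (2 * C))"
  have e0: "0 < \<epsilon>" "\<epsilon> \<le> 1" "1 \<le> Mx" using s0 unfolding \<epsilon>_def Mx_def by auto
  from compar[OF A0 e0] obtain c Nc where c: "0 < c" "c \<le> 1" and Nc: "Nc \<in> null_sets lebesgue"
    and cc: "\<forall>x\<in>\<Omega> - Nc. \<forall>y\<in>\<Omega> - Nc. \<forall>\<tau> \<tau>'.
           \<epsilon> \<le> \<tau> \<and> \<tau> \<le> Mx \<and> \<epsilon> \<le> \<tau>' \<and> \<tau>' \<le> Mx \<longrightarrow> c * phi_inv \<phi> x \<tau> \<le> phi_inv \<phi> y \<tau>'"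
    by blast
  define N' where "N' = N \<union> Nh \<union> N0 \<union> Nc"
  have N': "N' \<in> null_sets lebesgue" unfolding N'_def using N Nh N0 Nc by auto
  define \<beta>3 where "\<beta>3 = min (\<beta> / (2 * a)) c"
  show "\<exists>\<beta> h. 0 < \<beta> \<and> \<beta> \<le> 1 \<and> L1_Linf_nonneg \<Omega> h \<and>
     ae2_in \<Omega> (\<lambda>x y. \<forall>\<tau>. 0 \<le> \<tau> \<and> \<tau> \<le> \<sigma> \<longrightarrow>
        \<beta> * phi_inv \<phi> x (max \<tau> (h x + h y)) \<le> phi_inv \<phi> y (max \<tau> (h x + h y)))"
    unfolding ae2_in_def
  proof (intro exI[of _ "\<beta>3"] exI[of _ h] conjI bexI[OF _ N'] ballI allI impI)
    show "0 < \<beta>3" "\<beta>3 \<le> 1" "L1_Linf_nonneg \<Omega> h" using b hL c a1 by (auto simp: \<beta>3_def)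
    fix x y \<tau> assume x: "x \<in> \<Omega> - N'" and y: "y \<in> \<Omega> - N'" and tau: "0 \<le> \<tau> \<and> \<tau> \<le> \<sigma>"
    have gx: "goodpt a \<phi> x" and gy: "goodpt a \<phi> y" using gd x y by (auto simp: N'_def)
    have hx: "0 \<le> h x" "h x \<le> C" and hy: "0 \<le> h y" "h y \<le> C" using hC x y by (auto simp: N'_def)
    have xN: "x \<in> \<Omega> - N" "x \<in> \<Omega> - Nc" and yN: "y \<in> \<Omega> - N" "y \<in> \<Omega> - Nc"
      using x y by (auto simp: N'_def)
    define m where "m = max \<tau> (h x + h y)"
    have m0: "0 \<le> m" using tau unfolding m_def by auto
    have i0: "0 \<le> phi_inv \<phi> x m" by (rule inv_nonneg[OF gx])
    have "\<beta>3 * phi_inv \<phi> x m \<le> phi_inv \<phi> y m"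
    proof (cases "h x + h y \<le> \<sigma>")
      case True
      then have "m \<le> \<sigma>" using tau unfolding m_def by auto
      then have "\<beta> * phi_inv \<phi> x m \<le> phi_inv \<phi> y (m + h x + h y)"
        using B xN(1) yN(1) m0 \<open>m \<le> \<sigma>\<close> by blast
      also have "\<dots> \<le> phi_inv \<phi> y (2 * m)" using hx hy unfolding m_def by (intro inv_mono[OF gy]) auto
      also have "\<dots> \<le> (a * 2) * phi_inv \<phi> y m" using m0 by (intro inv_scale[OF gy a1]) auto
      finally have "(\<beta> / (a * 2)) * phi_inv \<phi> x m \<le> phi_inv \<phi> y m"
        using a1 by (intro scale_div) auto
      moreover have "\<beta>3 \<le> \<beta> / (a * 2)" unfolding \<beta>3_def by (simp add: mult.commute)
      ultimately show ?thesis using i0 shrink by blast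
    next
      case False
      then have "\<epsilon> \<le> m" "m \<le> Mx" using tau hx hy unfolding m_def \<epsilon>_def Mx_def by auto
      then have "c * phi_inv \<phi> x m \<le> phi_inv \<phi> y m" using cc xN(2) yN(2) by blast
      moreover have "\<beta>3 \<le> c" unfolding \<beta>3_def by simp
      ultimately show ?thesis using i0 shrink by blast
    qed
    then show "\<beta>3 * phi_inv \<phi> x (max \<tau> (h x + h y)) \<le> phi_inv \<phi> y (max \<tau> (h x + h y))"
      unfolding m_def .
  qed
qed

lemma three_imp_A2: assumes "cond_3 \<Omega> \<phi>" shows "cond_A2 \<Omega> \<phi>"
  unfolding cond_A2_def
proof (intro allI impI)
  fix \<sigma> :: real assume s0: "0 < \<sigma>"
  from assms s0 obtain \<beta> h where b: "0 < \<beta>" "\<beta> \<le> 1" and hL: "L1_Linf_nonneg \<Omega> h"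
    and ae: "ae2_in \<Omega> (\<lambda>x y. \<forall>\<tau>. 0 \<le> \<tau> \<and> \<tau> \<le> \<sigma> \<longrightarrow>
        \<beta> * phi_inv \<phi> x (max \<tau> (h x + h y)) \<le> phi_inv \<phi> y (max \<tau> (h x + h y)))"
    unfolding cond_3_def by blast
  from ae obtain N where N: "N \<in> null_sets lebesgue"
    and B: "\<forall>x\<in>\<Omega> - N. \<forall>y\<in>\<Omega> - N. \<forall>\<tau>. 0 \<le> \<tau> \<and> \<tau> \<le> \<sigma> \<longrightarrow>
        \<beta> * phi_inv \<phi> x (max \<tau> (h x + h y)) \<le> phi_inv \<phi> y (max \<tau> (h x + h y))"
    unfolding ae2_in_def by blast
  from h_props[OF Om hL] obtain C Nh where Nh: "Nh \<in> null_sets lebesgue"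
    and hC: "\<And>x. x \<in> \<Omega> - Nh \<Longrightarrow> 0 \<le> h x \<and> h x \<le> C" by blast
  define N' where "N' = N \<union> Nh \<union> N0"
  have N': "N' \<in> null_sets lebesgue" unfolding N'_def using N Nh N0 by auto
  show "\<exists>\<beta> h. 0 < \<beta> \<and> \<beta> \<le> 1 \<and> L1_Linf_nonneg \<Omega> h \<and>
     ae2_in \<Omega> (\<lambda>x y. \<forall>\<tau>. 0 \<le> \<tau> \<and> \<tau> \<le> \<sigma> \<longrightarrow>
        \<beta> * phi_inv \<phi> x \<tau> \<le> phi_inv \<phi> y (\<tau> + h x + h y))"
    unfolding ae2_in_def
  proof (intro exI[of _ "\<beta>"] exI[of _ h] conjI bexI[OF _ N'] ballI allI impI)
    show "0 < \<beta>" "\<beta> \<le> 1" "L1_Linf_nonneg \<Omega> h" using b hL by auto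
    fix x y \<tau> assume x: "x \<in> \<Omega> - N'" and y: "y \<in> \<Omega> - N'" and tau: "0 \<le> \<tau> \<and> \<tau> \<le> \<sigma>"
    have gx: "goodpt a \<phi> x" and gy: "goodpt a \<phi> y" using gd x y by (auto simp: N'_def)
    have hx: "0 \<le> h x" and hy: "0 \<le> h y" using hC x y by (auto simp: N'_def)
    have "\<beta> * phi_inv \<phi> x \<tau> \<le> \<beta> * phi_inv \<phi> x (max \<tau> (h x + h y))"
      using b by (intro mult_left_mono inv_mono[OF gx]) auto
    also have "\<dots> \<le> phi_inv \<phi> y (max \<tau> (h x + h y))"
      using B x y tau unfolding N'_def by blast
    also have "\<dots> \<le> phi_inv \<phi> y (\<tau> + h x + h y)" using tau hx hy by (intro inv_mono[OF gy]) auto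
    finally show "\<beta> * phi_inv \<phi> x \<tau> \<le> phi_inv \<phi> y (\<tau> + h x + h y)" .
  qed
qed

lemma A2_imp_4: assumes "cond_A2 \<Omega> \<phi>" shows "cond_4 \<Omega> \<phi>"
  unfolding cond_4_def
proof (intro allI impI)
  fix \<sigma> :: real assume s0: "0 < \<sigma>"
  have A0: "cond_A0 \<Omega> \<phi>" by (rule A2_imp_A0[OF assms])
  from assms s0 obtain \<beta> h where b: "0 < \<beta>" "\<beta> \<le> 1" and hL: "L1_Linf_nonneg \<Omega> h"
    and ae: "ae2_in \<Omega> (\<lambda>x y. \<forall>\<tau>. 0 \<le> \<tau> \<and> \<tau> \<le> \<sigma> \<longrightarrow>
        \<beta> * phi_inv \<phi> x \<tau> \<le> phi_inv \<phi> y (\<tau> + h x + h y))"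
    unfolding cond_A2_def by blast
  from ae obtain N where N: "N \<in> null_sets lebesgue"
    and B: "\<forall>x\<in>\<Omega> - N. \<forall>y\<in>\<Omega> - N. \<forall>\<tau>. 0 \<le> \<tau> \<and> \<tau> \<le> \<sigma> \<longrightarrow>
        \<beta> * phi_inv \<phi> x \<tau> \<le> phi_inv \<phi> y (\<tau> + h x + h y)"
    unfolding ae2_in_def by blast
  from h_props[OF Om hL] obtain C Nh where C: "0 \<le> C" and Nh: "Nh \<in> null_sets lebesgue"
    and hC: "\<And>x. x \<in> \<Omega> - Nh \<Longrightarrow> 0 \<le> h x \<and> h x \<le> C" by blast
  define \<epsilon> where "\<epsilon> = min (\<sigma> / 2) 1"
  define Mx where "Mx = max \<sigma> 1"
  have e0: "0 < \<epsilon>" "\<epsilon> \<le> 1" "1 \<le> Mx" using s0 unfolding \<epsilon>_def Mx_def by auto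
  from compar[OF A0 e0] obtain c Nc where c: "0 < c" "c \<le> 1" and Nc: "Nc \<in> null_sets lebesgue"
    and cc: "\<forall>x\<in>\<Omega> - Nc. \<forall>y\<in>\<Omega> - Nc. \<forall>\<tau> \<tau>'.
           \<epsilon> \<le> \<tau> \<and> \<tau> \<le> Mx \<and> \<epsilon> \<le> \<tau>' \<and> \<tau>' \<le> Mx \<longrightarrow> c * phi_inv \<phi> x \<tau> \<le> phi_inv \<phi> y \<tau>'"
    by blast
  define N' where "N' = N \<union> Nh \<union> N0 \<union> Nc"
  have N': "N' \<in> null_sets lebesgue" unfolding N'_def using N Nh N0 Nc by auto
  define \<beta>4 where "\<beta>4 = min (\<beta> / (a * 2)) c"
  define h4 where "h4 = (\<lambda>x. min (h x) (\<sigma> / 2))"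
  have h4L: "L1_Linf_nonneg \<Omega> h4" unfolding h4_def using L1_min[OF Om hL] s0 by simp
  have h4b: "AE x in lebesgue_on \<Omega>. h4 x \<le> \<sigma> / 2" unfolding h4_def by simp
  show "\<exists>\<beta> h. 0 < \<beta> \<and> \<beta> \<le> 1 \<and> L1_Linf_nonneg \<Omega> h \<and>
     (AE x in lebesgue_on \<Omega>. h x \<le> \<sigma> / 2) \<and>
     ae2_in \<Omega> (\<lambda>x y. \<forall>\<tau>. h x + h y \<le> \<tau> \<and> \<tau> \<le> \<sigma> \<longrightarrow>
        \<beta> * phi_inv \<phi> x \<tau> \<le> phi_inv \<phi> y \<tau>)"
    unfolding ae2_in_def
  proof (intro exI[of _ "\<beta>4"] exI[of _ h4] conjI bexI[OF _ N'] ballI allI impI)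
    show "0 < \<beta>4" "\<beta>4 \<le> 1" using b c a1 by (auto simp: \<beta>4_def)
    show "L1_Linf_nonneg \<Omega> h4" by (rule h4L)
    show "AE x in lebesgue_on \<Omega>. h4 x \<le> \<sigma> / 2" by (rule h4b)
    fix x y \<tau> assume x: "x \<in> \<Omega> - N'" and y: "y \<in> \<Omega> - N'" and tau: "h4 x + h4 y \<le> \<tau> \<and> \<tau> \<le> \<sigma>"
    have gx: "goodpt a \<phi> x" and gy: "goodpt a \<phi> y" using gd x y by (auto simp: N'_def)
    have hx: "0 \<le> h x" "h x \<le> C" and hy: "0 \<le> h y" "h y \<le> C" using hC x y by (auto simp: N'_def)
    have xN: "x \<in> \<Omega> - N" "x \<in> \<Omega> - Nc" and yN: "y \<in> \<Omega> - N" "y \<in> \<Omega> - Nc"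
      using x y by (auto simp: N'_def)
    have i0: "0 \<le> phi_inv \<phi> x \<tau>" by (rule inv_nonneg[OF gx])
    have t0: "0 \<le> \<tau>" using tau hx hy s0 unfolding h4_def by auto
    show "\<beta>4 * phi_inv \<phi> x \<tau> \<le> phi_inv \<phi> y \<tau>"
    proof (cases "h x + h y \<le> \<tau>")
      case True
      have "\<beta> * phi_inv \<phi> x \<tau> \<le> phi_inv \<phi> y (\<tau> + h x + h y)"
        using B xN(1) yN(1) t0 tau by blast
      also have "\<dots> \<le> phi_inv \<phi> y (2 * \<tau>)" using True by (intro inv_mono[OF gy]) auto
      also have "\<dots> \<le> (a * 2) * phi_inv \<phi> y \<tau>" using t0 by (intro inv_scale[OF gy a1]) auto
      finally have "(\<beta> / (a * 2)) * phi_inv \<phi> x \<tau> \<le> phi_inv \<phi> y \<tau>"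
        using a1 by (intro scale_div) auto
      moreover have "\<beta>4 \<le> \<beta> / (a * 2)" unfolding \<beta>4_def by simp
      ultimately show ?thesis using i0 shrink by blast
    next
      case False
      then have "\<sigma> / 2 < h x \<or> \<sigma> / 2 < h y" using tau unfolding h4_def by auto
      then have "\<sigma> / 2 \<le> h4 x + h4 y" using hx hy s0 unfolding h4_def by auto
      then have "\<epsilon> \<le> \<tau>" "\<tau> \<le> Mx" using tau unfolding \<epsilon>_def Mx_def by auto
      then have "c * phi_inv \<phi> x \<tau> \<le> phi_inv \<phi> y \<tau>" using cc xN(2) yN(2) by blast
      moreover have "\<beta>4 \<le> c" unfolding \<beta>4_def by simp
      ultimately show ?thesis using i0 shrink by blast
    qed
  qed
qed

lemma four_imp_A0: assumes "cond_4 \<Omega> \<phi>" shows "cond_A0 \<Omega> \<phi>"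
proof -
  have s2: "(0::real) < 2" by simp
  from assms s2 obtain \<beta> h where b: "0 < \<beta>" "\<beta> \<le> 1" and hL: "L1_Linf_nonneg \<Omega> h"
    and hb: "AE x in lebesgue_on \<Omega>. h x \<le> 2 / 2"
    and ae: "ae2_in \<Omega> (\<lambda>x y. \<forall>\<tau>. h x + h y \<le> \<tau> \<and> \<tau> \<le> 2 \<longrightarrow>
        \<beta> * phi_inv \<phi> x \<tau> \<le> phi_inv \<phi> y \<tau>)"
    unfolding cond_4_def by blast
  from ae obtain N where N: "N \<in> null_sets lebesgue"
    and B: "\<forall>x\<in>\<Omega> - N. \<forall>y\<in>\<Omega> - N. \<forall>\<tau>. h x + h y \<le> \<tau> \<and> \<tau> \<le> 2 \<longrightarrow>
        \<beta> * phi_inv \<phi> x \<tau> \<le> phi_inv \<phi> y \<tau>"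
    unfolding ae2_in_def by blast
  from AE_to_null[OF Om hb] obtain Nb where Nb: "Nb \<in> null_sets lebesgue"
    and hb': "\<And>x. x \<in> \<Omega> - Nb \<Longrightarrow> h x \<le> 1" by auto
  define M where "M = N \<union> Nb \<union> N0"
  have M: "M \<in> null_sets lebesgue" unfolding M_def using N Nb N0 by auto
  show ?thesis
  proof (rule ratio_A0[OF _ M])
    show "0 < (a * 2) / \<beta>" using a1 b by simp
    fix x y assume x: "x \<in> \<Omega> - M" and y: "y \<in> \<Omega> - M"
    have gx: "goodpt a \<phi> x" and gy: "goodpt a \<phi> y" using gd x y by (auto simp: M_def)
    have hx: "h x \<le> 1" and hy: "h y \<le> 1" using hb' x y by (auto simp: M_def)
    have xN: "x \<in> \<Omega> - N" and yN: "y \<in> \<Omega> - N" using x y by (auto simp: M_def)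
    have "\<beta> * phi_inv \<phi> x 1 \<le> \<beta> * phi_inv \<phi> x 2"
      using b by (intro mult_left_mono inv_mono[OF gx]) auto
    also have "\<dots> \<le> phi_inv \<phi> y 2" using B xN yN hx hy by fastforce
    also have "\<dots> = phi_inv \<phi> y (2 * 1)" by simp
    also have "\<dots> \<le> (a * 2) * phi_inv \<phi> y 1" by (intro inv_scale[OF gy a1]) auto
    finally show "phi_inv \<phi> x 1 \<le> (a * 2) / \<beta> * phi_inv \<phi> y 1"
      using b by (intro div_left) auto
  qed
qed

lemma four_part: assumes "cond_4 \<Omega> \<phi>"
  shows "\<forall>\<sigma> > 0. \<exists>\<beta> h. 0 < \<beta> \<and> \<beta> \<le> 1 \<and> L1_Linf_nonneg \<Omega> h \<and>
     ae2_in \<Omega> (\<lambda>x y. \<forall>\<tau>. h x + h y \<le> \<tau> \<and> \<tau> \<le> \<sigma> \<longrightarrow>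
        \<beta> * phi_inv \<phi> x \<tau> \<le> phi_inv \<phi> y \<tau>)"
proof (intro allI impI)
  fix \<sigma> :: real assume s0: "0 < \<sigma>"
  from assms s0 obtain \<beta> h where b: "0 < \<beta>" "\<beta> \<le> 1" and hL: "L1_Linf_nonneg \<Omega> h"
    and ae: "ae2_in \<Omega> (\<lambda>x y. \<forall>\<tau>. h x + h y \<le> \<tau> \<and> \<tau> \<le> \<sigma> \<longrightarrow>
        \<beta> * phi_inv \<phi> x \<tau> \<le> phi_inv \<phi> y \<tau>)"
    unfolding cond_4_def by blast
  then show "\<exists>\<beta> h. 0 < \<beta> \<and> \<beta> \<le> 1 \<and> L1_Linf_nonneg \<Omega> h \<and>
     ae2_in \<Omega> (\<lambda>x y. \<forall>\<tau>. h x + h y \<le> \<tau> \<and> \<tau> \<le> \<sigma> \<longrightarrow>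
        \<beta> * phi_inv \<phi> x \<tau> \<le> phi_inv \<phi> y \<tau>)" by blast
qed

lemma four_imp_5: assumes "cond_4 \<Omega> \<phi>" shows "cond_5 \<Omega> \<phi>"
  unfolding cond_5_def using four_imp_A0[OF assms] four_part[OF assms] by blast

lemma A2_imp_5: assumes "cond_A2 \<Omega> \<phi>" shows "cond_5 \<Omega> \<phi>"
  unfolding cond_5_def using A2_imp_A0[OF assms] four_part[OF A2_imp_4[OF assms]] by blast

lemma five_imp_A2: assumes "cond_5 \<Omega> \<phi>" shows "cond_A2 \<Omega> \<phi>"
  unfolding cond_A2_def
proof (intro allI impI)
  fix \<sigma> :: real assume s0: "0 < \<sigma>"
  have A0: "cond_A0 \<Omega> \<phi>" using assms unfolding cond_5_def by blast
  from assms s0 obtain \<beta> h where b: "0 < \<beta>" "\<beta> \<le> 1" and hL: "L1_Linf_nonneg \<Omega> h"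
    and ae: "ae2_in \<Omega> (\<lambda>x y. \<forall>\<tau>. h x + h y \<le> \<tau> \<and> \<tau> \<le> \<sigma> \<longrightarrow>
        \<beta> * phi_inv \<phi> x \<tau> \<le> phi_inv \<phi> y \<tau>)"
    unfolding cond_5_def by blast
  from ae obtain N where N: "N \<in> null_sets lebesgue"
    and B: "\<forall>x\<in>\<Omega> - N. \<forall>y\<in>\<Omega> - N. \<forall>\<tau>. h x + h y \<le> \<tau> \<and> \<tau> \<le> \<sigma> \<longrightarrow>
        \<beta> * phi_inv \<phi> x \<tau> \<le> phi_inv \<phi> y \<tau>"
    unfolding ae2_in_def by blast
  from h_props[OF Om hL] obtain C Nh where Nh: "Nh \<in> null_sets lebesgue"
    and hC: "\<And>x. x \<in> \<Omega> - Nh \<Longrightarrow> 0 \<le> h x \<and> h x \<le> C" by blast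
  define \<epsilon> where "\<epsilon> = min \<sigma> 1"
  define Mx where "Mx = max \<sigma> 1"
  have e0: "0 < \<epsilon>" "\<epsilon> \<le> 1" "1 \<le> Mx" using s0 unfolding \<epsilon>_def Mx_def by auto
  from compar[OF A0 e0] obtain c Nc where c: "0 < c" "c \<le> 1" and Nc: "Nc \<in> null_sets lebesgue"
    and cc: "\<forall>x\<in>\<Omega> - Nc. \<forall>y\<in>\<Omega> - Nc. \<forall>\<tau> \<tau>'.
           \<epsilon> \<le> \<tau> \<and> \<tau> \<le> Mx \<and> \<epsilon> \<le> \<tau>' \<and> \<tau>' \<le> Mx \<longrightarrow> c * phi_inv \<phi> x \<tau> \<le> phi_inv \<phi> y \<tau>'"
    by blast
  define N' where "N' = N \<union> Nh \<union> N0 \<union> Nc"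
  have N': "N' \<in> null_sets lebesgue" unfolding N'_def using N Nh N0 Nc by auto
  define \<beta>' where "\<beta>' = min \<beta> c"
  show "\<exists>\<beta> h. 0 < \<beta> \<and> \<beta> \<le> 1 \<and> L1_Linf_nonneg \<Omega> h \<and>
     ae2_in \<Omega> (\<lambda>x y. \<forall>\<tau>. 0 \<le> \<tau> \<and> \<tau> \<le> \<sigma> \<longrightarrow>
        \<beta> * phi_inv \<phi> x \<tau> \<le> phi_inv \<phi> y (\<tau> + h x + h y))"
    unfolding ae2_in_def
  proof (intro exI[of _ "\<beta>'"] exI[of _ h] conjI bexI[OF _ N'] ballI allI impI)
    show "0 < \<beta>'" "\<beta>' \<le> 1" "L1_Linf_nonneg \<Omega> h" using b c hL by (auto simp: \<beta>'_def)
    fix x y \<tau> assume x: "x \<in> \<Omega> - N'" and y: "y \<in> \<Omega> - N'" and tau: "0 \<le> \<tau> \<and> \<tau> \<le> \<sigma>"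
    have gx: "goodpt a \<phi> x" and gy: "goodpt a \<phi> y" using gd x y by (auto simp: N'_def)
    have hx: "0 \<le> h x" and hy: "0 \<le> h y" using hC x y by (auto simp: N'_def)
    have xN: "x \<in> \<Omega> - N" "x \<in> \<Omega> - Nc" and yN: "y \<in> \<Omega> - N" "y \<in> \<Omega> - Nc"
      using x y by (auto simp: N'_def)
    have i0: "0 \<le> phi_inv \<phi> x \<tau>" by (rule inv_nonneg[OF gx])
    have sb: "\<beta>' \<le> \<beta>" "\<beta>' \<le> c" unfolding \<beta>'_def by auto
    show "\<beta>' * phi_inv \<phi> x \<tau> \<le> phi_inv \<phi> y (\<tau> + h x + h y)"
    proof (cases "h x + h y \<le> \<tau>")
      case True
      have "\<beta> * phi_inv \<phi> x \<tau> \<le> phi_inv \<phi> y \<tau>" using B xN(1) yN(1) True tau by blast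
      also have "\<dots> \<le> phi_inv \<phi> y (\<tau> + h x + h y)" using hx hy by (intro inv_mono[OF gy]) auto
      finally show ?thesis using i0 sb shrink by blast
    next
      case False
      show ?thesis
      proof (cases "h x + h y \<le> \<sigma>")
        case True
        have "\<beta> * phi_inv \<phi> x \<tau> \<le> \<beta> * phi_inv \<phi> x (h x + h y)"
          using b False by (intro mult_left_mono inv_mono[OF gx]) auto
        also have "\<dots> \<le> phi_inv \<phi> y (h x + h y)" using B xN(1) yN(1) True by blast
        also have "\<dots> \<le> phi_inv \<phi> y (\<tau> + h x + h y)" using tau by (intro inv_mono[OF gy]) auto
        finally show ?thesis using i0 sb shrink by blast
      next
        case False
        have "c * phi_inv \<phi> x \<tau> \<le> c * phi_inv \<phi> x \<sigma>"
          using c tau by (intro mult_left_mono inv_mono[OF gx]) auto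
        also have "\<dots> \<le> phi_inv \<phi> y \<sigma>"
        proof -
          have "\<epsilon> \<le> \<sigma>" "\<sigma> \<le> Mx" unfolding \<epsilon>_def Mx_def by auto
          then show ?thesis using cc xN(2) yN(2) by blast
        qed
        also have "\<dots> \<le> phi_inv \<phi> y (\<tau> + h x + h y)" using tau False by (intro inv_mono[OF gy]) auto
        finally show ?thesis using i0 sb shrink by blast
      qed
    qed
  qed
qed

end

theorem proposition3p1:
  fixes \<Omega> :: "'a::euclidean_space set" and \<phi> :: "'a \<Rightarrow> real \<Rightarrow> ennreal"
  assumes "\<Omega> \<in> sets lebesgue"
    and "weak_Phi \<Omega> \<phi>"
  shows "(cond_A2 \<Omega> \<phi> \<longleftrightarrow> cond_2 \<Omega> \<phi>) \<and> (cond_A2 \<Omega> \<phi> \<longleftrightarrow> cond_3 \<Omega> \<phi>) \<and>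
         (cond_A2 \<Omega> \<phi> \<longleftrightarrow> cond_4 \<Omega> \<phi>) \<and> (cond_A2 \<Omega> \<phi> \<longleftrightarrow> cond_5 \<Omega> \<phi>)"
proof -
  obtain a N0 where a1: "1 \<le> a" and N0: "N0 \<in> null_sets lebesgue"
    and gd: "\<forall>x\<in>\<Omega> - N0. goodpt a \<phi> x"
    using weak_good[OF assms(2)] by blast
  have gd': "\<And>x. x \<in> \<Omega> - N0 \<Longrightarrow> goodpt a \<phi> x" using gd by blast
  note r1 = A2_imp_2[OF assms(1) a1 N0 gd'] and r2 = two_imp_A2[OF assms(1) a1 N0 gd']
    and r3 = A2_imp_3[OF assms(1) a1 N0 gd'] and r4 = three_imp_A2[OF assms(1) a1 N0 gd']
    and r5 = A2_imp_4[OF assms(1) a1 N0 gd'] and r6 = four_imp_5[OF assms(1) a1 N0 gd']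
    and r7 = A2_imp_5[OF assms(1) a1 N0 gd'] and r8 = five_imp_A2[OF assms(1) a1 N0 gd']
  show ?thesis using r1 r2 r3 r4 r5 r6 r7 r8 by blast
qed

end
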